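(* Let $c,M>0$ and assume that either $\eta>1$ and $a,b>0$, or $\eta=1$ and $b>a>0$. Then there is a constant $C>0$ such that for all real $x,y$ with $0\le x\le My<\infty$, $$\frac{a(1+x)y^2+b(1+x)^\eta y^2}{1+y^2}-\frac{2b(1+x)^\eta y^4}{(1+y^2)^2}+\frac{c(1+x)^\eta y^4}{(1+y^2)^2(1+\log(1+y^2))}\le C.$$ *)

theory Defs
  imports Complex_Main
begin

end

theory Submission
  imports Defs
begin

lemma large_g:
  fixes b c \<beta> \<epsilon> t :: real
  assumes "b > 0" "c > 0" "0 < \<beta>" "\<beta> < b" "\<epsilon> = (b - \<beta>) / 2"
    "t \<ge> 1" "\<epsilon> * t \<ge> b + 3 * \<beta>" "t \<ge> exp (c / \<epsilon>)"
  shows "b * t * (1 - t) / (1 + t)^2 + c * t^2 / ((1 + t)^2 * (1 + ln (1 + t))) \<le> - \<beta>"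
proof -
  have ep: "\<epsilon> > 0" using assms by simp
  have "c / \<epsilon> = ln (exp (c / \<epsilon>))" by simp
  also have "\<dots> \<le> ln t" using assms(8) assms(6) by (subst ln_le_cancel_iff) auto
  finally have "ln t \<ge> c / \<epsilon>" .
  moreover have "ln (1 + t) \<ge> ln t" using assms(6) by simp
  ultimately have L: "1 + ln (1 + t) \<ge> 1 + c / \<epsilon>" by linarith
  have cp: "c / \<epsilon> > 0" using assms ep by simp
  have Lpos: "1 + ln (1 + t) > 0" using L cp by linarith
  have "c / (1 + ln (1 + t)) \<le> \<epsilon>"
  proof -
    have "c \<le> \<epsilon> * (1 + c / \<epsilon>)" using ep cp by (simp add: field_simps)
    also have "\<dots> \<le> \<epsilon> * (1 + ln (1 + t))" using L ep by simp
    finally show ?thesis using Lpos by (simp add: divide_simps mult.commute)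
  qed
  hence cl: "c * t^2 / ((1 + t)^2 * (1 + ln (1 + t))) \<le> \<epsilon> * t^2 / (1 + t)^2"
  proof -
    assume h: "c / (1 + ln (1 + t)) \<le> \<epsilon>"
    have "c * t^2 / ((1 + t)^2 * (1 + ln (1 + t))) = (c / (1 + ln (1 + t))) * (t^2 / (1 + t)^2)"
      by simp
    also have "\<dots> \<le> \<epsilon> * (t^2 / (1 + t)^2)"
      using h by (intro mult_right_mono) auto
    finally show ?thesis by simp
  qed
  have poly: "b * t * (1 - t) + \<epsilon> * t^2 \<le> - \<beta> * (1 + t)^2"
  proof -
    have "\<epsilon> * t^2 = (\<epsilon> * t) * t" by (simp add: power2_eq_square)
    also have "\<dots> \<ge> (b + 3 * \<beta>) * t" using assms(7) assms(6) by (intro mult_right_mono) auto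
    finally have "\<epsilon> * t^2 \<ge> (b + 3 * \<beta>) * t" .
    moreover have "\<beta> * t \<ge> \<beta>" using assms by simp
    moreover have "b * t^2 = \<beta> * t^2 + 2 * \<epsilon> * t^2" proof -
      have "b = \<beta> + 2 * \<epsilon>" using assms(5) by simp
      thus ?thesis by (simp add: algebra_simps)
    qed
    moreover have "b * t * (1 - t) + \<epsilon> * t^2 = b * t - b * t^2 + \<epsilon> * t^2"
      by (simp add: algebra_simps power2_eq_square)
    moreover have "- \<beta> * (1 + t)^2 = - \<beta> - 2 * \<beta> * t - \<beta> * t^2"
      by (simp add: algebra_simps power2_eq_square)
    moreover have "(b + 3 * \<beta>) * t = b * t + 3 * (\<beta> * t)" by (simp add: algebra_simps)
    ultimately show ?thesis by linarith
  qed
  have tp: "(1 + t)^2 > 0" using assms by simp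
  have "(b * t * (1 - t) + \<epsilon> * t^2) / (1 + t)^2 \<le> - \<beta>"
    using poly tp by (simp add: pos_divide_le_eq)
  hence "b * t * (1 - t) / (1 + t)^2 + \<epsilon> * t^2 / (1 + t)^2 \<le> - \<beta>"
    by (simp add: add_divide_distrib)
  thus ?thesis using cl by linarith
qed

lemma aux_K:
  fixes a b \<eta> :: real
  assumes "(\<eta> > 1 \<and> a > 0 \<and> b > 0) \<or> (\<eta> = 1 \<and> b > a \<and> a > 0)"
  shows "\<exists>\<beta> K. 0 < \<beta> \<and> \<beta> < b \<and> (\<forall>X\<ge>1. a * X - \<beta> * X powr \<eta> \<le> K)"
  using assms
proof
  assume h: "\<eta> > 1 \<and> a > 0 \<and> b > 0"
  define \<beta> where "\<beta> = b / 2"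
  define X0 where "X0 = (a / \<beta>) powr (1 / (\<eta> - 1))"
  have bp: "\<beta> > 0" "\<beta> < b" using h by (auto simp: \<beta>_def)
  have X0p: "X0 > 0" using h bp by (simp add: X0_def)
  have "\<forall>X\<ge>1. a * X - \<beta> * X powr \<eta> \<le> a * X0"
  proof (intro allI impI)
    fix X :: real assume X: "X \<ge> 1"
    have Pp: "X powr \<eta> \<ge> 0" by simp
    show "a * X - \<beta> * X powr \<eta> \<le> a * X0"
    proof (cases "X \<ge> X0")
      case True
      have "X0 powr (\<eta> - 1) = a / \<beta>" unfolding X0_def using h bp
        by (simp add: powr_powr)
      moreover have "X0 powr (\<eta> - 1) \<le> X powr (\<eta> - 1)"
        using True X0p h by (intro powr_mono2) auto
      ultimately have "a / \<beta> \<le> X powr (\<eta> - 1)" by simp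
      hence "a \<le> \<beta> * X powr (\<eta> - 1)" using bp by (simp add: divide_simps mult.commute)
      hence "a * X \<le> \<beta> * X powr (\<eta> - 1) * X" using X by (intro mult_right_mono) auto
      also have "\<beta> * X powr (\<eta> - 1) * X = \<beta> * X powr \<eta>"
        using X by (simp add: powr_diff)
      finally have "a * X - \<beta> * X powr \<eta> \<le> 0" by simp
      moreover have "a * X0 > 0" using h X0p by simp
      ultimately show ?thesis by linarith
    next
      case False
      hence "a * X \<le> a * X0" using h by (intro mult_left_mono) auto
      moreover have "\<beta> * X powr \<eta> \<ge> 0" using bp Pp by simp
      ultimately show ?thesis by linarith
    qed
  qed
  thus ?thesis using bp by blast
next
  assume h: "\<eta> = 1 \<and> b > a \<and> a > 0"
  have "\<forall>X\<ge>1. a * X - a * X powr \<eta> \<le> 0" using h by simp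
  thus ?thesis using h by blast
qed

lemma identity:
  fixes a b c X P t :: real
  assumes "t \<ge> 0"
  shows "(a * X * t + b * P * t) / (1 + t)
     - 2 * b * P * t^2 / (1 + t)^2
     + c * P * t^2 / ((1 + t)^2 * (1 + ln (1 + t)))
   = a * X * (t / (1 + t)) + P * (b * t * (1 - t) / (1 + t)^2 + c * t^2 / ((1 + t)^2 * (1 + ln (1 + t))))"
proof -
  have tp: "1 + t \<noteq> 0" using assms by simp
  have "(a * X * t + b * P * t) / (1 + t) = a * X * (t / (1 + t)) + b * P * t / (1 + t)"
    by (simp add: add_divide_distrib)
  moreover have "b * P * t / (1 + t) - 2 * b * P * t^2 / (1 + t)^2 = P * (b * t * (1 - t) / (1 + t)^2)"
  proof -
    have "b * P * t / (1 + t) = b * P * t * (1 + t) / (1 + t)^2" using tp by (simp add: power2_eq_square)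
    also have "\<dots> - 2 * b * P * t^2 / (1 + t)^2 = (b * P * t * (1 + t) - 2 * b * P * t^2) / (1 + t)^2"
      by (simp add: diff_divide_distrib)
    also have "b * P * t * (1 + t) - 2 * b * P * t^2 = P * (b * t * (1 - t))"
      by (simp add: algebra_simps power2_eq_square)
    finally show ?thesis by simp
  qed
  moreover have "c * P * t^2 / ((1 + t)^2 * (1 + ln (1 + t))) = P * (c * t^2 / ((1 + t)^2 * (1 + ln (1 + t))))"
    by simp
  ultimately show ?thesis by (simp add: algebra_simps)
qed

lemma small_g:
  fixes b c t :: real
  assumes "b > 0" "c > 0" "t \<ge> 0"
  shows "b * t * (1 - t) / (1 + t)^2 + c * t^2 / ((1 + t)^2 * (1 + ln (1 + t))) \<le> b + c"
proof -
  have tp: "(1 + t)^2 > 0" using assms by simp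
  have "t * (1 - t) \<le> (1 + t)^2" using assms by (simp add: power2_eq_square algebra_simps)
  hence "b * (t * (1 - t)) \<le> b * (1 + t)^2" using assms by (intro mult_left_mono) auto
  hence 1: "b * t * (1 - t) / (1 + t)^2 \<le> b" using tp by (simp add: pos_divide_le_eq mult.assoc)
  have L: "1 + ln (1 + t) \<ge> 1" using assms by simp
  have "c * t^2 \<le> c * ((1 + t)^2 * (1 + ln (1 + t)))"
  proof -
    have "t^2 \<le> (1 + t)^2" using assms by (intro power_mono) auto
    also have "\<dots> \<le> (1 + t)^2 * (1 + ln (1 + t))" using L tp
      using mult_left_mono[OF L, of "(1 + t)^2"] by simp
    finally show ?thesis using assms by (intro mult_left_mono) auto
  qed
  hence 2: "c * t^2 / ((1 + t)^2 * (1 + ln (1 + t))) \<le> c" using tp L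
    by (subst pos_divide_le_eq) auto
  show ?thesis using 1 2 by linarith
qed

theorem lemma5p1:
  fixes a b c M \<eta> :: real
  assumes "c > 0" and "M > 0"
    and "(\<eta> > 1 \<and> a > 0 \<and> b > 0) \<or> (\<eta> = 1 \<and> b > a \<and> a > 0)"
  shows "\<exists>C>0. \<forall>x y :: real. 0 \<le> x \<and> x \<le> M * y \<longrightarrow>
     (a * (1 + x) * y^2 + b * (1 + x) powr \<eta> * y^2) / (1 + y^2)
     - 2 * b * (1 + x) powr \<eta> * y^4 / (1 + y^2)^2
     + c * (1 + x) powr \<eta> * y^4 / ((1 + y^2)^2 * (1 + ln (1 + y^2))) \<le> C"
proof -
  obtain \<beta> K where bK: "0 < \<beta>" "\<beta> < b" "\<forall>X\<ge>1. a * X - \<beta> * X powr \<eta> \<le> K"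
    using aux_K[OF assms(3)] by blast
  have ab: "a > 0" "b > 0" "\<eta> \<ge> 0" using assms(3) by auto
  define \<epsilon> where "\<epsilon> = (b - \<beta>) / 2"
  define T where "T = max 1 (max ((b + 3 * \<beta>) / \<epsilon>) (exp (c / \<epsilon>)))"
  define X1 where "X1 = 1 + M * max 1 T"
  define C where "C = max 1 (max K (a * X1 + (b + c) * X1 powr \<eta>))"
  have ep: "\<epsilon> > 0" using bK by (simp add: \<epsilon>_def)
  have "\<forall>x y :: real. 0 \<le> x \<and> x \<le> M * y \<longrightarrow>
     (a * (1 + x) * y^2 + b * (1 + x) powr \<eta> * y^2) / (1 + y^2)
     - 2 * b * (1 + x) powr \<eta> * y^4 / (1 + y^2)^2
     + c * (1 + x) powr \<eta> * y^4 / ((1 + y^2)^2 * (1 + ln (1 + y^2))) \<le> C"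
  proof (intro allI impI)
    fix x y :: real
    assume xy: "0 \<le> x \<and> x \<le> M * y"
    have y0: "y \<ge> 0"
      proof (rule ccontr)
      assume "\<not> y \<ge> 0"
      hence "M * y < 0" using assms(2) by (simp add: mult_pos_neg)
      thus False using xy by linarith
    qed
    define t where "t = y^2"
    define X where "X = 1 + x"
    define P where "P = X powr \<eta>"
    have t0: "t \<ge> 0" by (simp add: t_def)
    have X1': "X \<ge> 1" using xy by (simp add: X_def)
    have Pp: "P > 0" using X1' by (simp add: P_def)
    have y4: "y^4 = t^2" by (simp add: t_def flip: power_mult)
    define g where "g = b * t * (1 - t) / (1 + t)^2 + c * t^2 / ((1 + t)^2 * (1 + ln (1 + t)))"
    have E: "(a * (1 + x) * y^2 + b * (1 + x) powr \<eta> * y^2) / (1 + y^2)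
     - 2 * b * (1 + x) powr \<eta> * y^4 / (1 + y^2)^2
     + c * (1 + x) powr \<eta> * y^4 / ((1 + y^2)^2 * (1 + ln (1 + y^2)))
     = a * X * (t / (1 + t)) + P * g"
      unfolding y4 g_def P_def X_def t_def[symmetric] using identity[OF t0] by simp
    have tt: "t / (1 + t) \<le> 1" using t0 by simp
    have aX: "a * X * (t / (1 + t)) \<le> a * X" using tt ab X1' by (intro mult_left_le) auto
    show "(a * (1 + x) * y^2 + b * (1 + x) powr \<eta> * y^2) / (1 + y^2)
     - 2 * b * (1 + x) powr \<eta> * y^4 / (1 + y^2)^2
     + c * (1 + x) powr \<eta> * y^4 / ((1 + y^2)^2 * (1 + ln (1 + y^2))) \<le> C"
    proof (cases "t \<ge> T")
      case True
      have t1: "t \<ge> 1" using True by (simp add: T_def)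
      have t2: "t \<ge> exp (c / \<epsilon>)" using True by (simp add: T_def)
      have "(b + 3 * \<beta>) / \<epsilon> \<le> t" using True by (simp add: T_def)
      hence t3: "b + 3 * \<beta> \<le> \<epsilon> * t" using ep by (simp add: pos_divide_le_eq mult.commute)
      have "g \<le> - \<beta>" unfolding g_def
        by (rule large_g[OF ab(2) assms(1) bK(1) bK(2) \<epsilon>_def t1 t3 t2])
      hence "P * g \<le> P * (- \<beta>)" using Pp by (intro mult_left_mono) auto
      hence "a * X * (t / (1 + t)) + P * g \<le> a * X - \<beta> * P" using aX by (simp add: mult.commute)
      also have "\<dots> \<le> K" using bK(3) X1' by (simp add: P_def)
      finally show ?thesis unfolding E C_def by simp
    next
      case False
      have "y \<le> max 1 T"
      proof (cases "y \<le> 1")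
        case False
        hence "y \<le> y^2" by (simp add: power2_eq_square)
        thus ?thesis using \<open>\<not> t \<ge> T\<close> t_def by simp
      qed simp
      hence "M * y \<le> M * max 1 T" using assms(2) by simp
      hence XX: "X \<le> X1" using xy by (simp add: X_def X1_def)
      have "g \<le> b + c" unfolding g_def using small_g ab assms(1) t0 by simp
      hence "P * g \<le> P * (b + c)" using Pp by (intro mult_left_mono) auto
      also have "\<dots> \<le> X1 powr \<eta> * (b + c)" unfolding P_def using XX X1' ab assms(1)
        by (intro mult_right_mono powr_mono2) auto
      finally have "P * g \<le> X1 powr \<eta> * (b + c)" .
      have "a * X * (t / (1 + t)) + P * g \<le> a * X1 + (b + c) * X1 powr \<eta>"
        proof -
        have "a * X \<le> a * X1" using XX ab by (intro mult_left_mono) auto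
        thus ?thesis using aX \<open>P * g \<le> X1 powr \<eta> * (b + c)\<close> by (simp add: mult.commute)
      qed
      thus ?thesis unfolding E C_def by simp
    qed
  qed
  moreover have "C > 0" by (simp add: C_def)
  ultimately show ?thesis by blast
qed

end
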